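(* Let $X$ be a set and $d$ an ultra-semimetric on $X$. Let $E$ be the group of all finite subsets of $X$ with an even number of elements, with symmetric difference as the group operation (identify $x\in X$ with $\{x\}$, so that $x-y=x+y=\{x,y\}\triangle\emptyset$ for $x\neq y$). For $u\in E$ let $\mathrm{Conf}(u)$ be the set of finite families $\omega=\{(x_1,x_2),\dots,(x_{2n-1},x_{2n})\}$ of pairs of elements of $X$ with $\{x_1\}\triangle\{x_2\}\triangle\cdots\triangle\{x_{2n}\}=u$, and set $\varphi(\omega)=\max_{1\le i\le n}d(x_{2i-1},x_{2i})$ and $\|u\|=\inf_{\omega\in\mathrm{Conf}(u)}\varphi(\omega)$. Then: (i) for $u\neq 0$ the infimum is attained, and equals the minimum of $\varphi(\omega)$ over configurations $\omega$ in which all $2n$ entries are pairwise distinct; (ii) $\|\cdot\|$ is an ultra-seminorm on $E$, i.e. $\|0\|=0$, $\|u\|=\|-u\|\ge0$ and $\|u+v\|\le\max\{\|u\|,\|v\|\}$; (iii) $\|x-y\|=d(x,y)$ for all $x,y\in X$.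
   Context: An ultra-semimetric on $X$ is a function $d:X\times X\to[0,\infty)$ with $d(x,x)=0$, $d(x,y)=d(y,x)$ and $d(x,z)\le\max\{d(x,y),d(y,z)\}$. *)

theory Defs
  imports Complex_Main
begin

definition ultra_semimetric :: "'a set \<Rightarrow> ('a \<Rightarrow> 'a \<Rightarrow> real) \<Rightarrow> bool" where
  "ultra_semimetric X d \<longleftrightarrow>
     (\<forall>x\<in>X. \<forall>y\<in>X. d x y \<ge> 0) \<and>
     (\<forall>x\<in>X. d x x = 0) \<and>
     (\<forall>x\<in>X. \<forall>y\<in>X. d x y = d y x) \<and>
     (\<forall>x\<in>X. \<forall>y\<in>X. \<forall>z\<in>X. d x z \<le> max (d x y) (d y z))"

definition symd :: "'a set \<Rightarrow> 'a set \<Rightarrow> 'a set" where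
  "symd A B = (A - B) \<union> (B - A)"

definition evenE :: "'a set \<Rightarrow> 'a set set" where
  "evenE X = {u. u \<subseteq> X \<and> finite u \<and> even (card u)}"

text \<open>A configuration is a finite family of pairs, represented as a list
  [(x1,x2),...,(x_{2n-1},x_{2n})]; its entries and its sum in E.\<close>
definition conf_entries :: "('a \<times> 'a) list \<Rightarrow> 'a list" where
  "conf_entries \<omega> = concat (map (\<lambda>(a,b). [a,b]) \<omega>)"

definition conf_sum :: "('a \<times> 'a) list \<Rightarrow> 'a set" where
  "conf_sum \<omega> = foldr (\<lambda>x S. symd {x} S) (conf_entries \<omega>) {}"

definition Conf :: "'a set \<Rightarrow> 'a set \<Rightarrow> ('a \<times> 'a) list set" where
  "Conf X u = {\<omega>. set (conf_entries \<omega>) \<subseteq> X \<and> conf_sum \<omega> = u}"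

text \<open>phi(omega) = max of d over the pairs (0 for the empty family).\<close>
definition phi :: "('a \<Rightarrow> 'a \<Rightarrow> real) \<Rightarrow> ('a \<times> 'a) list \<Rightarrow> real" where
  "phi d \<omega> = foldr max (map (\<lambda>(a,b). d a b) \<omega>) 0"

definition unorm :: "'a set \<Rightarrow> ('a \<Rightarrow> 'a \<Rightarrow> real) \<Rightarrow> 'a set \<Rightarrow> real" where
  "unorm X d u = Inf (phi d ` Conf X u)"

end

theory Submission
  imports Defs "HOL-Library.Multiset"
begin

lemma ce_Nil[simp]: "conf_entries [] = []"
  by (simp add: conf_entries_def)

lemma ce_Cons[simp]: "conf_entries (p#\<omega>) = fst p # snd p # conf_entries \<omega>"
  by (cases p) (simp add: conf_entries_def)

lemma ce_append[simp]: "conf_entries (a @ b) = conf_entries a @ conf_entries b"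
  by (simp add: conf_entries_def)

lemma foldr_symd: "foldr (\<lambda>x S. symd {x} S) xs {} = {y. odd (count (mset xs) y)}"
  by (induction xs) (auto simp: symd_def)

lemma conf_sum_count: "conf_sum \<omega> = {y. odd (count (mset (conf_entries \<omega>)) y)}"
  by (simp add: conf_sum_def foldr_symd)

lemma set_ce: "x \<in> set (conf_entries \<omega>) \<longleftrightarrow> (\<exists>p\<in>set \<omega>. x = fst p \<or> x = snd p)"
  by (induction \<omega>) auto

lemma entry_in: "p \<in> set \<omega> \<Longrightarrow> fst p \<in> set (conf_entries \<omega>) \<and> snd p \<in> set (conf_entries \<omega>)"
  by (induction \<omega>) auto

lemma entries_subX: "set (conf_entries \<omega>) \<subseteq> X \<longleftrightarrow> (\<forall>p\<in>set \<omega>. fst p \<in> X \<and> snd p \<in> X)"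
  by (induction \<omega>) auto

lemma phi_Cons[simp]: "phi d (p#\<omega>) = max (d (fst p) (snd p)) (phi d \<omega>)"
  by (cases p) (simp add: phi_def)

lemma phi_Nil[simp]: "phi d [] = 0"
  by (simp add: phi_def)

lemma phi_ge0: "0 \<le> phi d \<omega>"
  by (induction \<omega>) auto

lemma phi_le: "phi d \<omega> \<le> r \<longleftrightarrow> 0 \<le> r \<and> (\<forall>p\<in>set \<omega>. d (fst p) (snd p) \<le> r)"
  by (induction \<omega>) auto

lemma phi_ge: "p \<in> set \<omega> \<Longrightarrow> d (fst p) (snd p) \<le> phi d \<omega>"
  by (induction \<omega>) auto

lemma phi_in: "phi d \<omega> \<in> insert 0 ((\<lambda>p. d (fst p) (snd p)) ` set \<omega>)"
  by (induction \<omega>) (auto simp: max_def)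

lemma phi_append: "phi d (a @ b) = max (phi d a) (phi d b)"
  using phi_ge0[of d b] by (induction a) auto

lemma entries_remove1:
  "p \<in> set \<omega> \<Longrightarrow> mset (conf_entries \<omega>) = {#fst p, snd p#} + mset (conf_entries (remove1 p \<omega>))"
  by (induction \<omega>) auto

lemma distinct_pair: "distinct (conf_entries \<omega>) \<Longrightarrow> p \<in> set \<omega> \<Longrightarrow> fst p \<noteq> snd p"
  by (induction \<omega>) auto

lemma distinct_sum: "distinct (conf_entries \<omega>) \<Longrightarrow> conf_sum \<omega> = set (conf_entries \<omega>)"
  unfolding conf_sum_count by (auto simp flip: mset_set_set simp: count_mset_set')

lemma reduce:
  assumes us: "ultra_semimetric X d"
  shows "set (conf_entries \<omega>) \<subseteq> X \<Longrightarrow> \<exists>\<omega>'. set (conf_entries \<omega>') \<subseteq> X \<and> conf_sum \<omega>' = conf_sum \<omega>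
      \<and> distinct (conf_entries \<omega>') \<and> phi d \<omega>' \<le> phi d \<omega>"
proof (induction "length \<omega>" arbitrary: \<omega> rule: less_induct)
  case less
  note IH = less.hyps
  show ?case
  proof (cases "distinct (conf_entries \<omega>)")
    case True
    then show ?thesis using less.prems by blast
  next
    case False
    then obtain xs ys zs x where dec: "conf_entries \<omega> = xs@[x]@ys@[x]@zs"
      using not_distinct_decomp by blast
    have cnt: "count (mset (conf_entries \<omega>)) x \<ge> 2" unfolding dec by simp
    have xin: "x \<in> set (conf_entries \<omega>)" unfolding dec by simp
    have pairsX: "\<And>p. p \<in> set \<omega> \<Longrightarrow> fst p \<in> X \<and> snd p \<in> X"
      using less.prems entries_subX by metis
    have dsym: "\<And>a b. a \<in> X \<Longrightarrow> b \<in> X \<Longrightarrow> d a b = d b a"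
      and dtri: "\<And>a b c. a \<in> X \<Longrightarrow> b \<in> X \<Longrightarrow> c \<in> X \<Longrightarrow> d a c \<le> max (d a b) (d b c)"
      using us unfolding ultra_semimetric_def by auto
    have gen: "\<exists>\<omega>''. set (conf_entries \<omega>'') \<subseteq> X \<and> conf_sum \<omega>'' = conf_sum \<omega>
      \<and> distinct (conf_entries \<omega>'') \<and> phi d \<omega>'' \<le> phi d \<omega>"
      if "length \<omega>' < length \<omega>" "set (conf_entries \<omega>') \<subseteq> X" "conf_sum \<omega>' = conf_sum \<omega>"
         "phi d \<omega>' \<le> phi d \<omega>" for \<omega>'
      using IH[OF that(1) that(2)] that(3,4) by (metis order_trans)
    show ?thesis
    proof (cases "(x,x) \<in> set \<omega>")
      case True
      define \<omega>' where "\<omega>' = remove1 (x,x) \<omega>"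
      have E: "mset (conf_entries \<omega>) = {#x,x#} + mset (conf_entries \<omega>')"
        using entries_remove1[OF True] unfolding \<omega>'_def by simp
      have sub: "set \<omega>' \<subseteq> set \<omega>" unfolding \<omega>'_def by (rule set_remove1_subset)
      have "length \<omega>' < length \<omega>" unfolding \<omega>'_def using True
        by (auto simp: length_remove1 dest: length_pos_if_in_set)
      moreover have "set (conf_entries \<omega>') \<subseteq> X" using sub pairsX unfolding entries_subX by blast
      moreover have "conf_sum \<omega>' = conf_sum \<omega>" unfolding conf_sum_count E by auto
      moreover have "phi d \<omega>' \<le> phi d \<omega>" unfolding phi_le using sub phi_ge[of _ \<omega> d] phi_ge0[of d \<omega>] by blast
      ultimately show ?thesis using gen by blast
    next
      case nxx: False
      obtain p where p: "p \<in> set \<omega>" "x = fst p \<or> x = snd p" using xin unfolding set_ce by blast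
      define c where "c = (if fst p = x then snd p else fst p)"
      have pne: "fst p \<noteq> snd p" using nxx p by (cases p) auto
      have mp: "{#fst p, snd p#} = {#x, c#}" using p unfolding c_def by auto
      define \<omega>1 where "\<omega>1 = remove1 p \<omega>"
      have E1: "mset (conf_entries \<omega>) = {#x,c#} + mset (conf_entries \<omega>1)"
        using entries_remove1[OF p(1)] mp unfolding \<omega>1_def by simp
      have cne: "c \<noteq> x" using pne p unfolding c_def by auto
      have "count (mset (conf_entries \<omega>1)) x \<ge> 1" using cnt E1 cne by simp
      then have "x \<in> set (conf_entries \<omega>1)" by (simp add: Suc_le_eq)
      then obtain q where q: "q \<in> set \<omega>1" "x = fst q \<or> x = snd q" unfolding set_ce by blast
      have sub1: "set \<omega>1 \<subseteq> set \<omega>" unfolding \<omega>1_def by (rule set_remove1_subset)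
      define e where "e = (if fst q = x then snd q else fst q)"
      have mq: "{#fst q, snd q#} = {#x, e#}" using q unfolding e_def by auto
      define \<omega>2 where "\<omega>2 = remove1 q \<omega>1"
      have E2: "mset (conf_entries \<omega>1) = {#x,e#} + mset (conf_entries \<omega>2)"
        using entries_remove1[OF q(1)] mq unfolding \<omega>2_def by simp
      have sub2: "set \<omega>2 \<subseteq> set \<omega>" unfolding \<omega>2_def using sub1 set_remove1_subset[of q "\<omega>1"] by (rule order_trans[rotated])
      define \<omega>' where "\<omega>' = (c,e) # \<omega>2"
      have l1: "length \<omega>1 = length \<omega> - 1" unfolding \<omega>1_def using p(1) by (simp add: length_remove1)
      have l2: "length \<omega>2 = length \<omega>1 - 1" unfolding \<omega>2_def using q(1) by (simp add: length_remove1)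
      have g1: "length \<omega>1 > 0" using q(1) by (cases \<omega>1) auto
      have len: "length \<omega>2 + 2 = length \<omega>" using l1 l2 g1 by linarith
      have pX: "x \<in> X" "c \<in> X" using pairsX[OF p(1)] p unfolding c_def by auto
      have qX: "e \<in> X" using pairsX[of q] q(1) sub1 unfolding e_def by auto
      have pp: "d (fst p) (snd p) \<le> phi d \<omega>" by (rule phi_ge[OF p(1)])
      have qq: "d (fst q) (snd q) \<le> phi d \<omega>" using sub1 q(1) by (intro phi_ge) blast
      have dxc: "d x c \<le> phi d \<omega>"
      proof (cases "fst p = x")
        case True then show ?thesis using pp unfolding c_def by simp
      next
        case False then have "x = snd p" "c = fst p" using p(2) unfolding c_def by auto
        then show ?thesis using pp dsym[OF pX] by simp
      qed
      have dxe: "d x e \<le> phi d \<omega>"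
      proof (cases "fst q = x")
        case True then show ?thesis using qq unfolding e_def by simp
      next
        case False then have "x = snd q" "e = fst q" using q(2) unfolding e_def by auto
        then show ?thesis using qq dsym[OF pX(1) qX] by simp
      qed
      have dce: "d c e \<le> phi d \<omega>"
        using dtri[OF pX(2) pX(1) qX] dsym[OF pX] dxc dxe by auto
      have "length \<omega>' < length \<omega>" unfolding \<omega>'_def using len by simp
      moreover have "set (conf_entries \<omega>') \<subseteq> X" unfolding \<omega>'_def entries_subX
        using sub2 pairsX pX qX by auto
      moreover have "conf_sum \<omega>' = conf_sum \<omega>" unfolding conf_sum_count E1 E2 \<omega>'_def by auto
      moreover have "phi d \<omega>' \<le> phi d \<omega>" unfolding \<omega>'_def phi_le
        using dce sub2 phi_ge[of _ \<omega> d] phi_ge0[of d \<omega>] by auto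
      ultimately show ?thesis using gen by blast
    qed
  qed
qed

lemma exist_conf:
  "u \<subseteq> X \<Longrightarrow> finite u \<Longrightarrow> even (card u) \<Longrightarrow> \<exists>\<omega>. set (conf_entries \<omega>) \<subseteq> X \<and> conf_sum \<omega> = u"
proof (induction "card u" arbitrary: u rule: less_induct)
  case less
  show ?case
  proof (cases "u = {}")
    case True
    then show ?thesis by (intro exI[of _ "[]"]) (simp add: conf_sum_def)
  next
    case False
    then obtain a where a: "a \<in> u" by blast
    have "card (u - {a}) = card u - 1" using a less.prems by simp
    moreover have "card u > 0" using False less.prems by auto
    then obtain k where k: "card u = Suc k" using gr0_conv_Suc by blast
    ultimately have "odd (card (u - {a}))" using less.prems by simp
    then have "u - {a} \<noteq> {}" by (metis card.empty even_zero)
    then obtain b where b: "b \<in> u" "b \<noteq> a" by blast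
    have c: "card (u - {a,b}) = card u - 2" using a b less.prems by (simp add: card_Diff_subset)
    have "card u \<ge> 2" using a b less.prems
      by (metis card_2_iff card_mono empty_subsetI insert_subset)
    then obtain \<omega> where w: "set (conf_entries \<omega>) \<subseteq> X" "conf_sum \<omega> = u - {a,b}"
      using less.hyps[of "u - {a,b}"] less.prems c by auto
    have "conf_sum ((a,b)#\<omega>) = symd {a} (symd {b} (conf_sum \<omega>))"
      by (simp add: conf_sum_def)
    also have "\<dots> = u" using w(2) a b by (auto simp: symd_def)
    finally show ?thesis using w(1) a b less.prems by (intro exI[of _ "(a,b)#\<omega>"]) auto
  qed
qed

lemma attained:
  assumes us: "ultra_semimetric X d" and u: "u \<in> evenE X"
  shows "\<exists>\<omega>0\<in>Conf X u. distinct (conf_entries \<omega>0) \<and> unorm X d u = phi d \<omega>0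
           \<and> (\<forall>\<omega>\<in>Conf X u. phi d \<omega>0 \<le> phi d \<omega>)"
proof -
  define D where "D = {\<omega>\<in>Conf X u. distinct (conf_entries \<omega>)}"
  obtain \<omega> where "set (conf_entries \<omega>) \<subseteq> X" "conf_sum \<omega> = u"
    using exist_conf u unfolding evenE_def by blast
  then obtain \<omega>1 where "\<omega>1 \<in> D" using reduce[OF us] unfolding D_def Conf_def by force
  then have ne: "phi d ` D \<noteq> {}" by blast
  have "phi d ` D \<subseteq> insert 0 ((\<lambda>p. d (fst p) (snd p)) ` (u \<times> u))"
  proof
    fix r assume "r \<in> phi d ` D"
    then obtain w where w: "w \<in> D" "r = phi d w" by blast
    have "set w \<subseteq> u \<times> u"
    proof
      fix p assume "p \<in> set w"
      then have "fst p \<in> set (conf_entries w)" "snd p \<in> set (conf_entries w)" using entry_in by blast+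
      moreover have "set (conf_entries w) = u" using w(1) distinct_sum unfolding D_def Conf_def by auto
      ultimately show "p \<in> u \<times> u" by (cases p) auto
    qed
    then show "r \<in> insert 0 ((\<lambda>p. d (fst p) (snd p)) ` (u \<times> u))"
      using phi_in[of d w] w(2) by blast
  qed
  moreover have "finite (u \<times> u)" using u unfolding evenE_def by auto
  ultimately have fin: "finite (phi d ` D)" by (meson finite_imageI finite_insert finite_subset)
  define m where "m = Min (phi d ` D)"
  have "m \<in> phi d ` D" unfolding m_def using fin ne by (rule Min_in)
  then obtain \<omega>0 where w0: "\<omega>0 \<in> D" "phi d \<omega>0 = m" by auto
  have low: "\<forall>w\<in>Conf X u. phi d \<omega>0 \<le> phi d w"
  proof
    fix w assume w: "w \<in> Conf X u"
    then obtain w' where "set (conf_entries w') \<subseteq> X" "conf_sum w' = u"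
        "distinct (conf_entries w')" "phi d w' \<le> phi d w"
      using reduce[OF us, of w] unfolding Conf_def by auto
    then have "w' \<in> D" "phi d w' \<le> phi d w" unfolding D_def Conf_def by auto
    moreover have "Min (phi d ` D) \<le> phi d w'" using fin \<open>w' \<in> D\<close> by (intro Min_le) auto
    ultimately show "phi d \<omega>0 \<le> phi d w" using w0 unfolding m_def by linarith
  qed
  have "unorm X d u = phi d \<omega>0" unfolding unorm_def
    using w0(1) low unfolding D_def by (intro cInf_eq_minimum) auto
  then show ?thesis using w0 low unfolding D_def by blast
qed

lemma unorm_le:
  "\<omega> \<in> Conf X u \<Longrightarrow> unorm X d u \<le> phi d \<omega>"
  unfolding unorm_def by (rule cInf_lower) (auto intro: bdd_belowI[of _ 0] simp: phi_ge0)

theorem mainTheorem13: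
  fixes X :: "'a set" and d :: "'a \<Rightarrow> 'a \<Rightarrow> real"
  assumes "ultra_semimetric X d"
  shows "(\<forall>u\<in>evenE X. u \<noteq> {} \<longrightarrow>
            (\<exists>\<omega>\<in>Conf X u. phi d \<omega> = unorm X d u) \<and>
            (\<exists>\<omega>\<in>Conf X u. distinct (conf_entries \<omega>) \<and> phi d \<omega> = unorm X d u \<and>
               (\<forall>\<omega>'\<in>Conf X u. distinct (conf_entries \<omega>') \<longrightarrow> phi d \<omega> \<le> phi d \<omega>')))
       \<and> unorm X d {} = 0
       \<and> (\<forall>u\<in>evenE X. unorm X d u \<ge> 0)
       \<and> (\<forall>u\<in>evenE X. \<forall>v\<in>evenE X. unorm X d (symd u v) \<le> max (unorm X d u) (unorm X d v))
       \<and> (\<forall>x\<in>X. \<forall>y\<in>X. unorm X d (symd {x} {y}) = d x y)"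
proof (intro conjI ballI impI)
  fix u assume u: "u \<in> evenE X"
  obtain w where w: "w \<in> Conf X u" "distinct (conf_entries w)" "unorm X d u = phi d w"
     "\<forall>\<omega>\<in>Conf X u. phi d w \<le> phi d \<omega>" using attained[OF assms u] by blast
  show "\<exists>\<omega>\<in>Conf X u. phi d \<omega> = unorm X d u" using w by metis
  show "\<exists>\<omega>\<in>Conf X u. distinct (conf_entries \<omega>) \<and> phi d \<omega> = unorm X d u \<and>
               (\<forall>\<omega>'\<in>Conf X u. distinct (conf_entries \<omega>') \<longrightarrow> phi d \<omega> \<le> phi d \<omega>')"
    using w by metis
  show "unorm X d u \<ge> 0" using w phi_ge0 by metis
next
  have "[] \<in> Conf X {}" by (simp add: Conf_def conf_sum_def)
  then have "0 \<in> phi d ` Conf X {}" by (metis phi_Nil image_eqI)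
  then show "unorm X d {} = 0" unfolding unorm_def
    by (intro cInf_eq_minimum) (auto simp: phi_ge0)
next
  fix u v assume u: "u \<in> evenE X" and v: "v \<in> evenE X"
  obtain wu where wu: "wu \<in> Conf X u" "unorm X d u = phi d wu" using attained[OF assms u] by blast
  obtain wv where wv: "wv \<in> Conf X v" "unorm X d v = phi d wv" using attained[OF assms v] by blast
  have "wu @ wv \<in> Conf X (symd u v)" using wu(1) wv(1)
    unfolding Conf_def conf_sum_count symd_def by auto
  then show "unorm X d (symd u v) \<le> max (unorm X d u) (unorm X d v)"
    using unorm_le wu wv phi_append by metis
next
  fix x y assume x: "x \<in> X" and y: "y \<in> X"
  have dxx: "d x x = 0" using assms x unfolding ultra_semimetric_def by auto
  show "unorm X d (symd {x} {y}) = d x y"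
  proof (cases "x = y")
    case True
    have "[] \<in> Conf X {}" by (simp add: Conf_def conf_sum_def)
    then have "0 \<in> phi d ` Conf X {}" by (metis phi_Nil image_eqI)
    then have "unorm X d {} = 0" unfolding unorm_def
      by (intro cInf_eq_minimum) (auto simp: phi_ge0)
    then show ?thesis using True dxx by (simp add: symd_def)
  next
    case False
    have sd: "symd {x} {y} = {x,y}" using False by (auto simp: symd_def)
    have ue: "{x,y} \<in> evenE X" using x y False by (simp add: evenE_def)
    obtain w where w: "w \<in> Conf X {x,y}" "distinct (conf_entries w)" "unorm X d {x,y} = phi d w"
     "\<forall>\<omega>\<in>Conf X {x,y}. phi d w \<le> phi d \<omega>" using attained[OF assms ue] by blast
    have c1: "[(x,y)] \<in> Conf X {x,y}" using x y False
      by (auto simp: Conf_def conf_sum_def symd_def)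
    have d0: "d x y \<ge> 0" "d x y = d y x" using assms x y unfolding ultra_semimetric_def by auto
    have le: "phi d w \<le> d x y" using w(4) c1 d0 by force
    have se: "set (conf_entries w) = {x,y}" using w(1,2) distinct_sum unfolding Conf_def by auto
    then have "x \<in> set (conf_entries w)" by simp
    then obtain p where p: "p \<in> set w" unfolding set_ce by blast
    have "fst p \<in> {x,y}" "snd p \<in> {x,y}" "fst p \<noteq> snd p"
      using entry_in[OF p] se distinct_pair[OF w(2) p] by blast+
    then have "d (fst p) (snd p) = d x y" using d0 by auto
    then have "d x y \<le> phi d w" using phi_ge[OF p, where d=d] by simp
    then show ?thesis using le w(3) sd by simp
  qed
qed

end
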